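(* Let $T=\mathrm{Id}$ and fix $\mu,\alpha>0$. Let $(w,u,q,p)\in H^1(\Omega,\mathbb{R}^d)\times H^1(\Omega)\times L^2(\Omega,\mathbb{R}^d)\times L^2(\Omega,\mathcal{S}^{d\times d})$ satisfy system (S0), and for each $\gamma>0$ let $(w_\gamma,u_\gamma,q_\gamma,p_\gamma)$ in the same spaces satisfy system (S$_\gamma$). Then, as $\gamma\to0$: $u_\gamma\to u$ strongly in $H^1(\Omega)$, $w_\gamma\to w$ strongly in $H^1(\Omega,\mathbb{R}^d)$, $\operatorname{div}q_\gamma\to\operatorname{div}q$ weakly* in $H^1(\Omega)^*$, and $q_\gamma+\operatorname{div}p_\gamma\to q+\operatorname{div}p$ weakly* in $H^1(\Omega,\mathbb{R}^d)^*$.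
   Context: Let $d\ge2$, $\Omega\subset\mathbb{R}^d$ bounded open with Lipschitz boundary; $\mathcal{S}^{d\times d}$ real symmetric matrices; $|\cdot|$ Euclidean norm on $\mathbb{R}^d$, Frobenius norm on matrices. $\alpha_0,\alpha_1\in C(\overline\Omega)$, $\alpha_0,\alpha_1>\underline\alpha>0$. $f\in L^2(\Omega)$. $\nabla:H^1(\Omega)\to L^2(\Omega,\mathbb{R}^d)$, $Ew=\frac12(\nabla w+\nabla w^\top)$, adjoints $\nabla^*,E^*$; $\operatorname{div}q:=-\nabla^*q\in H^1(\Omega)^*$ and $\operatorname{div}p:=-E^*p\in H^1(\Omega,\mathbb{R}^d)^*$. $-\mu\Delta u$ is $v\mapsto\mu\int\nabla u\cdot\nabla v$; $\alpha w-\alpha\Delta w$ is $\omega\mapsto\alpha\int(w\cdot\omega+\nabla w:\nabla\omega)$. System (S0): $u-\mu\Delta u+\nabla^*q-f=0$ in $H^1(\Omega)^*$; $\alpha w-\alpha\Delta w-q+E^*p=0$ in $H^1(\Omega,\mathbb{R}^d)^*$; $|q|\le\alpha_1$, $|p|\le\alpha_0$ a.e.; for a.e. $x$: $\alpha_1(\nabla u-w)-q|\nabla u-w|=0$ if $|q(x)|=\alpha_1(x)$ and $\nabla u-w=0$ if $|q(x)|<\alpha_1(x)$; $\alpha_0Ew-p|Ew|=0$ if $|p(x)|=\alpha_0(x)$ and $Ew=0$ if $|p(x)|<\alpha_0(x)$. System (S$_\gamma$): $u_\gamma-\mu\Delta u_\gamma+\nabla^*q_\gamma-f=0$; $\alpha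 w_\gamma-\alpha\Delta w_\gamma-q_\gamma+E^*p_\gamma=0$; $\max(|\nabla u_\gamma-w_\gamma|,\gamma)q_\gamma-\alpha_1(\nabla u_\gamma-w_\gamma)=0$ in $L^2$; $\max(|Ew_\gamma|,\gamma)p_\gamma-\alpha_0Ew_\gamma=0$ in $L^2$. *)

theory Defs
  imports "HOL-Analysis.Analysis"
begin

text \<open>Strong Lipschitz boundary: near every boundary point the domain lies (locally)
 strictly below the graph of a Lipschitz function over the hyperplane orthogonal to some
 unit direction e.\<close>
definition lipschitz_boundary :: "(real^'n) set \<Rightarrow> bool" where
  "lipschitz_boundary \<Omega> \<longleftrightarrow>
     (\<forall>x\<in>frontier \<Omega>. \<exists>r>0. \<exists>e::real^'n. \<exists>g C. norm e = 1 \<and>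
        C-lipschitz_on UNIV g \<and> (\<forall>y t. g (y + t *\<^sub>R e) = g y) \<and>
        \<Omega> \<inter> ball x r = {y \<in> ball x r. y \<bullet> e < g y})"

definition partial :: "'n::finite \<Rightarrow> (real^'n \<Rightarrow> real) \<Rightarrow> real^'n \<Rightarrow> real" where
  "partial i \<phi> x = frechet_derivative \<phi> (at x) (axis i 1)"

primrec iter_partial :: "'n::finite list \<Rightarrow> (real^'n \<Rightarrow> real) \<Rightarrow> real^'n \<Rightarrow> real" where
  "iter_partial [] \<phi> = \<phi>"
| "iter_partial (i # is) \<phi> = partial i (iter_partial is \<phi>)"

definition C_infinity :: "(real^'n::finite \<Rightarrow> real) \<Rightarrow> bool" where
  "C_infinity \<phi> \<longleftrightarrow> (\<forall>is. continuous_on UNIV (iter_partial is \<phi>) \<and>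
                              (\<forall>x. iter_partial is \<phi> differentiable (at x)))"

definition test_fun :: "(real^'n::finite) set \<Rightarrow> (real^'n \<Rightarrow> real) \<Rightarrow> bool" where
  "test_fun \<Omega> \<phi> \<longleftrightarrow> C_infinity \<phi> \<and> compact (closure {x. \<phi> x \<noteq> 0}) \<and>
                      closure {x. \<phi> x \<noteq> 0} \<subseteq> \<Omega>"

definition L2 :: "(real^'n::finite) set \<Rightarrow> (real^'n \<Rightarrow> 'b::euclidean_space) \<Rightarrow> bool" where
  "L2 \<Omega> g \<longleftrightarrow> g \<in> borel_measurable (lebesgue_on \<Omega>) \<and>
                 integrable (lebesgue_on \<Omega>) (\<lambda>x. norm (g x) ^ 2)"

definition weak_grad :: "(real^'n::finite) set \<Rightarrow> (real^'n \<Rightarrow> real) \<Rightarrow> (real^'n \<Rightarrow> real^'n) \<Rightarrow> bool" where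
  "weak_grad \<Omega> u G \<longleftrightarrow> (\<forall>\<phi>. test_fun \<Omega> \<phi> \<longrightarrow> (\<forall>i.
      (LINT x|lebesgue_on \<Omega>. u x * partial i \<phi> x) = - (LINT x|lebesgue_on \<Omega>. G x $ i * \<phi> x)))"

definition H1 :: "(real^'n::finite) set \<Rightarrow> (real^'n \<Rightarrow> real) \<Rightarrow> bool" where
  "H1 \<Omega> u \<longleftrightarrow> L2 \<Omega> u \<and> (\<exists>G. L2 \<Omega> G \<and> weak_grad \<Omega> u G)"

definition grad :: "(real^'n::finite) set \<Rightarrow> (real^'n \<Rightarrow> real) \<Rightarrow> real^'n \<Rightarrow> real^'n" where
  "grad \<Omega> u = (SOME G. L2 \<Omega> G \<and> weak_grad \<Omega> u G)"

definition H1v :: "(real^'n::finite) set \<Rightarrow> (real^'n \<Rightarrow> real^'n) \<Rightarrow> bool" where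
  "H1v \<Omega> w \<longleftrightarrow> L2 \<Omega> w \<and> (\<forall>i. H1 \<Omega> (\<lambda>x. w x $ i))"

text \<open>Jacobian: (Grad w x) \$ i \$ j = d_j w_i.\<close>
definition Grad :: "(real^'n::finite) set \<Rightarrow> (real^'n \<Rightarrow> real^'n) \<Rightarrow> real^'n \<Rightarrow> real^'n^'n" where
  "Grad \<Omega> w x = (\<chi> i. grad \<Omega> (\<lambda>y. w y $ i) x)"

definition symgrad :: "(real^'n::finite) set \<Rightarrow> (real^'n \<Rightarrow> real^'n) \<Rightarrow> real^'n \<Rightarrow> real^'n^'n" where
  "symgrad \<Omega> w x = (1/2) *\<^sub>R (Grad \<Omega> w x + transpose (Grad \<Omega> w x))"

text \<open>The two variational equations common to both systems (in H1* and (H1^d)*).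
 Norms on matrices (type real^n^n) are Frobenius norms, inner products Frobenius products.\<close>
definition equations ::
  "(real^'n::finite) set \<Rightarrow> real \<Rightarrow> real \<Rightarrow> (real^'n \<Rightarrow> real)
   \<Rightarrow> (real^'n \<Rightarrow> real^'n) \<Rightarrow> (real^'n \<Rightarrow> real) \<Rightarrow> (real^'n \<Rightarrow> real^'n) \<Rightarrow> (real^'n \<Rightarrow> real^'n^'n) \<Rightarrow> bool" where
  "equations \<Omega> \<mu> \<alpha> f w u q p \<longleftrightarrow>
     H1v \<Omega> w \<and> H1 \<Omega> u \<and> L2 \<Omega> q \<and> L2 \<Omega> p \<and>
     (AE x in lebesgue_on \<Omega>. transpose (p x) = p x) \<and>
     (\<forall>v. H1 \<Omega> v \<longrightarrow>
        (LINT x|lebesgue_on \<Omega>. u x * v x)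
        + \<mu> * (LINT x|lebesgue_on \<Omega>. grad \<Omega> u x \<bullet> grad \<Omega> v x)
        + (LINT x|lebesgue_on \<Omega>. q x \<bullet> grad \<Omega> v x)
        - (LINT x|lebesgue_on \<Omega>. f x * v x) = 0) \<and>
     (\<forall>\<omega>. H1v \<Omega> \<omega> \<longrightarrow>
        \<alpha> * (LINT x|lebesgue_on \<Omega>. w x \<bullet> \<omega> x + Grad \<Omega> w x \<bullet> Grad \<Omega> \<omega> x)
        - (LINT x|lebesgue_on \<Omega>. q x \<bullet> \<omega> x)
        + (LINT x|lebesgue_on \<Omega>. p x \<bullet> symgrad \<Omega> \<omega> x) = 0)"

definition system_S0 ::
  "(real^'n::finite) set \<Rightarrow> real \<Rightarrow> real \<Rightarrow> (real^'n \<Rightarrow> real) \<Rightarrow> (real^'n \<Rightarrow> real) \<Rightarrow> (real^'n \<Rightarrow> real)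
   \<Rightarrow> (real^'n \<Rightarrow> real^'n) \<Rightarrow> (real^'n \<Rightarrow> real) \<Rightarrow> (real^'n \<Rightarrow> real^'n) \<Rightarrow> (real^'n \<Rightarrow> real^'n^'n) \<Rightarrow> bool" where
  "system_S0 \<Omega> \<mu> \<alpha> \<alpha>0 \<alpha>1 f w u q p \<longleftrightarrow>
     equations \<Omega> \<mu> \<alpha> f w u q p \<and>
     (AE x in lebesgue_on \<Omega>.
        norm (q x) \<le> \<alpha>1 x \<and> norm (p x) \<le> \<alpha>0 x \<and>
        (norm (q x) = \<alpha>1 x \<longrightarrow>
           \<alpha>1 x *\<^sub>R (grad \<Omega> u x - w x) - norm (grad \<Omega> u x - w x) *\<^sub>R q x = 0) \<and>
        (norm (q x) < \<alpha>1 x \<longrightarrow> grad \<Omega> u x - w x = 0) \<and>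
        (norm (p x) = \<alpha>0 x \<longrightarrow>
           \<alpha>0 x *\<^sub>R symgrad \<Omega> w x - norm (symgrad \<Omega> w x) *\<^sub>R p x = 0) \<and>
        (norm (p x) < \<alpha>0 x \<longrightarrow> symgrad \<Omega> w x = 0))"

definition system_Sgamma ::
  "(real^'n::finite) set \<Rightarrow> real \<Rightarrow> real \<Rightarrow> (real^'n \<Rightarrow> real) \<Rightarrow> (real^'n \<Rightarrow> real) \<Rightarrow> (real^'n \<Rightarrow> real)
   \<Rightarrow> real \<Rightarrow> (real^'n \<Rightarrow> real^'n) \<Rightarrow> (real^'n \<Rightarrow> real) \<Rightarrow> (real^'n \<Rightarrow> real^'n) \<Rightarrow> (real^'n \<Rightarrow> real^'n^'n) \<Rightarrow> bool" where
  "system_Sgamma \<Omega> \<mu> \<alpha> \<alpha>0 \<alpha>1 f \<gamma> w u q p \<longleftrightarrow>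
     equations \<Omega> \<mu> \<alpha> f w u q p \<and>
     (AE x in lebesgue_on \<Omega>.
        max (norm (grad \<Omega> u x - w x)) \<gamma> *\<^sub>R q x - \<alpha>1 x *\<^sub>R (grad \<Omega> u x - w x) = 0 \<and>
        max (norm (symgrad \<Omega> w x)) \<gamma> *\<^sub>R p x - \<alpha>0 x *\<^sub>R symgrad \<Omega> w x = 0)"

end

theory Submission
  imports Defs
begin

lemma meas_vec:
  fixes F :: "'a \<Rightarrow> 'b::euclidean_space^'n"
  assumes "\<And>i. (\<lambda>x. F x $ i) \<in> borel_measurable M"
  shows "F \<in> borel_measurable M"
  unfolding borel_measurable_euclidean_space[where f=F]
  by (auto simp: Basis_vec_def inner_axis intro!: borel_measurable_inner assms)

lemma meas_comp:
  fixes F :: "'a \<Rightarrow> 'b::euclidean_space^'n"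
  assumes "F \<in> borel_measurable M"
  shows "(\<lambda>x. F x $ i) \<in> borel_measurable M"
proof -
  have "(\<lambda>x. F x $ i) \<in> borel_measurable M"
    unfolding borel_measurable_euclidean_space[where f="\<lambda>x. F x $ i"]
    using assms by (auto simp flip: inner_axis intro!: borel_measurable_inner)
  then show ?thesis .
qed

lemma L2_add:
  fixes a b :: "real^'n::finite \<Rightarrow> 'b::euclidean_space"
  assumes "L2 \<Omega> a" "L2 \<Omega> b" shows "L2 \<Omega> (\<lambda>x. a x + b x)"
  unfolding L2_def
proof
  show "(\<lambda>x. a x + b x) \<in> borel_measurable (lebesgue_on \<Omega>)" using assms by (auto simp: L2_def)
  show "integrable (lebesgue_on \<Omega>) (\<lambda>x. (norm (a x + b x))\<^sup>2)"
  proof (rule Bochner_Integration.integrable_bound)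
    show "integrable (lebesgue_on \<Omega>) (\<lambda>x. 2 * (norm (a x))\<^sup>2 + 2 * (norm (b x))\<^sup>2)"
      using assms by (auto simp: L2_def)
    show "(\<lambda>x. (norm (a x + b x))\<^sup>2) \<in> borel_measurable (lebesgue_on \<Omega>)" using assms by (auto simp: L2_def)
    show "AE x in lebesgue_on \<Omega>. norm ((norm (a x + b x))\<^sup>2) \<le> norm (2 * (norm (a x))\<^sup>2 + 2 * (norm (b x))\<^sup>2)"
    proof (rule AE_I2)
      fix x
      have "norm (a x + b x) \<le> norm (a x) + norm (b x)" by (rule norm_triangle_ineq)
      then have "(norm (a x + b x))\<^sup>2 \<le> (norm (a x) + norm (b x))\<^sup>2" by (simp add: power_mono)
      also have "\<dots> \<le> 2 * (norm (a x))\<^sup>2 + 2 * (norm (b x))\<^sup>2"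
      proof -
        have "0 \<le> (norm (a x) - norm (b x))\<^sup>2" by simp
        then show ?thesis unfolding power2_sum power2_diff by linarith
      qed
      finally show "norm ((norm (a x + b x))\<^sup>2) \<le> norm (2 * (norm (a x))\<^sup>2 + 2 * (norm (b x))\<^sup>2)" by simp
    qed
  qed
qed

lemma L2_scale:
  fixes a :: "real^'n::finite \<Rightarrow> 'b::euclidean_space"
  assumes "L2 \<Omega> a" shows "L2 \<Omega> (\<lambda>x. c *\<^sub>R a x)"
  using assms by (auto simp: L2_def power_mult_distrib)

lemma L2_div:
  fixes a :: "real^'n::finite \<Rightarrow> real"
  assumes "L2 \<Omega> a" shows "L2 \<Omega> (\<lambda>x. a x / c)"
  using L2_scale[OF assms, of "1/c"] by simp

lemma L2_diff:
  fixes a b :: "real^'n::finite \<Rightarrow> 'b::euclidean_space"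
  assumes "L2 \<Omega> a" "L2 \<Omega> b" shows "L2 \<Omega> (\<lambda>x. a x - b x)"
  using L2_add[OF assms(1) L2_scale[OF assms(2), of "-1"]] by simp

lemma L2_inner:
  fixes a b :: "real^'n::finite \<Rightarrow> 'b::euclidean_space"
  assumes "L2 \<Omega> a" "L2 \<Omega> b" shows "integrable (lebesgue_on \<Omega>) (\<lambda>x. a x \<bullet> b x)"
proof (rule Bochner_Integration.integrable_bound)
  show "integrable (lebesgue_on \<Omega>) (\<lambda>x. (norm (a x))\<^sup>2 + (norm (b x))\<^sup>2)"
    using assms by (auto simp: L2_def)
  show "(\<lambda>x. a x \<bullet> b x) \<in> borel_measurable (lebesgue_on \<Omega>)" using assms by (auto simp: L2_def)
  show "AE x in lebesgue_on \<Omega>. norm (a x \<bullet> b x) \<le> norm ((norm (a x))\<^sup>2 + (norm (b x))\<^sup>2)"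
  proof (rule AE_I2)
    fix x
    have "\<bar>a x \<bullet> b x\<bar> \<le> norm (a x) * norm (b x)" by (rule Cauchy_Schwarz_ineq2)
    also have "\<dots> \<le> (norm (a x))\<^sup>2 + (norm (b x))\<^sup>2"
    proof -
      have "0 \<le> (norm (a x) - norm (b x))\<^sup>2" by simp
      moreover have "0 \<le> norm (a x) * norm (b x)" by simp
      ultimately show ?thesis unfolding power2_diff by linarith
    qed
    finally show "norm (a x \<bullet> b x) \<le> norm ((norm (a x))\<^sup>2 + (norm (b x))\<^sup>2)" by simp
  qed
qed

lemma L2_comp:
  fixes F :: "real^'n::finite \<Rightarrow> 'b::euclidean_space^'m"
  assumes "L2 \<Omega> F" shows "L2 \<Omega> (\<lambda>x. F x $ i)"
  unfolding L2_def
proof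
  show "(\<lambda>x. F x $ i) \<in> borel_measurable (lebesgue_on \<Omega>)" using assms meas_comp by (auto simp: L2_def)
  show "integrable (lebesgue_on \<Omega>) (\<lambda>x. (norm (F x $ i))\<^sup>2)"
  proof (rule Bochner_Integration.integrable_bound)
    show "integrable (lebesgue_on \<Omega>) (\<lambda>x. (norm (F x))\<^sup>2)" using assms by (auto simp: L2_def)
    have [measurable]: "(\<lambda>x. F x $ i) \<in> borel_measurable (lebesgue_on \<Omega>)" using assms meas_comp by (auto simp: L2_def)
    show "(\<lambda>x. (norm (F x $ i))\<^sup>2) \<in> borel_measurable (lebesgue_on \<Omega>)" by measurable
    show "AE x in lebesgue_on \<Omega>. norm ((norm (F x $ i))\<^sup>2) \<le> norm ((norm (F x))\<^sup>2)"
      by (intro AE_I2) (simp add: power_mono Finite_Cartesian_Product.norm_nth_le)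
  qed
qed

lemma L2_vec:
  fixes F :: "real^'n::finite \<Rightarrow> 'b::euclidean_space^'m::finite"
  assumes "\<And>i. L2 \<Omega> (\<lambda>x. F x $ i)" shows "L2 \<Omega> F"
  unfolding L2_def
proof
  show "F \<in> borel_measurable (lebesgue_on \<Omega>)" using assms by (auto simp: L2_def intro!: meas_vec)
  have "(\<lambda>x. (norm (F x))\<^sup>2) = (\<lambda>x. \<Sum>i\<in>UNIV. (norm (F x $ i))\<^sup>2)"
    by (simp add: norm_vec_def L2_set_def sum_nonneg)
  moreover have "integrable (lebesgue_on \<Omega>) (\<lambda>x. \<Sum>i\<in>UNIV. (norm (F x $ i))\<^sup>2)"
    using assms by (auto simp: L2_def)
  ultimately show "integrable (lebesgue_on \<Omega>) (\<lambda>x. (norm (F x))\<^sup>2)" by simp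
qed

lemma L2_grad: "H1 \<Omega> u \<Longrightarrow> L2 \<Omega> (grad \<Omega> u)"
  unfolding H1_def grad_def by (metis (mono_tags, lifting) someI_ex)

lemma L2_Grad: "H1v \<Omega> w \<Longrightarrow> L2 \<Omega> (Grad \<Omega> w)"
  unfolding Grad_def H1v_def by (rule L2_vec) (auto intro!: L2_grad)

lemma L2_symgrad: "H1v \<Omega> w \<Longrightarrow> L2 \<Omega> (symgrad \<Omega> w)"
proof -
  assume h: "H1v \<Omega> w"
  have G: "L2 \<Omega> (\<lambda>x. Grad \<Omega> w x $ i $ j)" for i j
    using L2_comp[OF L2_comp[OF L2_Grad[OF h]]] .
  show ?thesis unfolding symgrad_def
    by (rule L2_vec, rule L2_vec) (auto simp: transpose_def intro!: L2_div L2_add G)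
qed

lemma H1v_L2: "H1v \<Omega> w \<Longrightarrow> L2 \<Omega> w" by (simp add: H1v_def)
lemma H1_L2: "H1 \<Omega> w \<Longrightarrow> L2 \<Omega> w" by (simp add: H1_def)



lemma quad_disc:
  fixes A B J :: real
  assumes A: "A \<ge> 0" and J: "J \<ge> 0" and h: "\<And>s. 0 \<le> s\<^sup>2 * A - 2 * s * J + B"
  shows "J\<^sup>2 \<le> A * B"
proof (cases "A = 0")
  case True
  show ?thesis
  proof (rule ccontr)
    assume "\<not> ?thesis"
    then have "J \<noteq> 0" using True by auto
    then have "J > 0" using J by simp
    have "0 \<le> ((B+1)/(2*J))\<^sup>2 * A - 2 * ((B+1)/(2*J)) * J + B" by (rule h)
    also have "\<dots> = -1" using True \<open>J > 0\<close> by (simp add: field_simps)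
    finally show False by simp
  qed
next
  case False
  then have "A > 0" using A by simp
  have "0 \<le> (J/A)\<^sup>2 * A - 2 * (J/A) * J + B" by (rule h)
  also have "\<dots> = B - J\<^sup>2 / A" using \<open>A > 0\<close> by (simp add: field_simps power2_eq_square)
  finally have "J\<^sup>2 / A \<le> B" by simp
  then show ?thesis using \<open>A > 0\<close> by (simp add: field_simps mult.commute)
qed

lemma L2_norm: 
  fixes a :: "real^'n::finite \<Rightarrow> 'b::euclidean_space"
  assumes "L2 \<Omega> a" shows "L2 \<Omega> (\<lambda>x. norm (a x))"
  using assms by (auto simp: L2_def)

lemma L2_CS:
  fixes a b :: "real^'n::finite \<Rightarrow> 'b::euclidean_space"
  assumes a: "L2 \<Omega> a" and b: "L2 \<Omega> b"
  shows "\<bar>LINT x|lebesgue_on \<Omega>. a x \<bullet> b x\<bar> \<le>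
     sqrt (LINT x|lebesgue_on \<Omega>. (norm (a x))\<^sup>2) * sqrt (LINT x|lebesgue_on \<Omega>. (norm (b x))\<^sup>2)"
proof -
  let ?M = "lebesgue_on \<Omega>"
  define A where "A = (LINT x|?M. (norm (a x))\<^sup>2)"
  define B where "B = (LINT x|?M. (norm (b x))\<^sup>2)"
  define J where "J = (LINT x|?M. norm (a x) * norm (b x))"
  have iA: "integrable ?M (\<lambda>x. (norm (a x))\<^sup>2)" using a by (simp add: L2_def)
  have iB: "integrable ?M (\<lambda>x. (norm (b x))\<^sup>2)" using b by (simp add: L2_def)
  have iJ: "integrable ?M (\<lambda>x. norm (a x) * norm (b x))"
    using L2_inner[OF L2_norm[OF a] L2_norm[OF b]] by simp
  have iab: "integrable ?M (\<lambda>x. a x \<bullet> b x)" by (rule L2_inner[OF a b])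
  have A0: "A \<ge> 0" unfolding A_def by (rule integral_nonneg_AE) auto
  have J0: "J \<ge> 0" unfolding J_def by (rule integral_nonneg_AE) auto
  have q: "0 \<le> s\<^sup>2 * A - 2 * s * J + B" for s
  proof -
    have "0 \<le> (LINT x|?M. (s * norm (a x) - norm (b x))\<^sup>2)" by (rule integral_nonneg_AE) auto
    also have "(LINT x|?M. (s * norm (a x) - norm (b x))\<^sup>2) =
       (LINT x|?M. s\<^sup>2 * (norm (a x))\<^sup>2 - 2 * s * (norm (a x) * norm (b x)) + (norm (b x))\<^sup>2)"
      by (rule Bochner_Integration.integral_cong) (auto simp: power2_eq_square algebra_simps)
    also have "\<dots> = s\<^sup>2 * A - 2 * s * J + B"
      using iA iB iJ unfolding A_def B_def J_def by (simp add: integral_add integral_diff)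
    finally show ?thesis .
  qed
  have "J\<^sup>2 \<le> A * B" by (rule quad_disc[OF A0 J0 q])
  then have JJ: "J \<le> sqrt A * sqrt B"
    using J0 by (metis real_sqrt_le_mono real_sqrt_mult real_sqrt_abs abs_of_nonneg)
  have "(LINT x|?M. a x \<bullet> b x) \<le> J" unfolding J_def
    using iab iJ by (intro integral_mono) (auto intro: order_trans[OF abs_ge_self Cauchy_Schwarz_ineq2])
  moreover have "- J \<le> (LINT x|?M. a x \<bullet> b x)"
  proof -
    have "(LINT x|?M. - (norm (a x) * norm (b x))) \<le> (LINT x|?M. a x \<bullet> b x)"
    proof (rule integral_mono)
      show "integrable ?M (\<lambda>x. - (norm (a x) * norm (b x)))" using iJ by simp
      show "integrable ?M (\<lambda>x. a x \<bullet> b x)" by (rule iab)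
      fix x
      have "\<bar>a x \<bullet> b x\<bar> \<le> norm (a x) * norm (b x)" by (rule Cauchy_Schwarz_ineq2)
      then show "- (norm (a x) * norm (b x)) \<le> a x \<bullet> b x" unfolding abs_le_iff by linarith
    qed
    then show ?thesis unfolding J_def by simp
  qed
  ultimately show ?thesis using JJ unfolding A_def B_def by linarith
qed

lemma mono_est:
  fixes q g qg gg :: "'v::real_inner"
  assumes a: "a > 0" and gam: "\<gamma> > 0" and nq: "norm q \<le> a"
    and c1: "norm q = a \<longrightarrow> a *\<^sub>R g - norm g *\<^sub>R q = 0"
    and c2: "norm q < a \<longrightarrow> g = 0"
    and c3: "max (norm gg) \<gamma> *\<^sub>R qg - a *\<^sub>R gg = 0"
  shows "(qg - q) \<bullet> (gg - g) \<ge> - (a * \<gamma> / 4)"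
proof -
  have qg_eq: "q \<bullet> g = a * norm g"
  proof (cases "norm q = a")
    case True
    then have "a *\<^sub>R g = norm g *\<^sub>R q" using c1 by simp
    then have "(a *\<^sub>R g) \<bullet> q = (norm g *\<^sub>R q) \<bullet> q" by simp
    then have "a * (g \<bullet> q) = norm g * a\<^sup>2" using True by (simp add: dot_square_norm)
    then have "a * (q \<bullet> g) = a * (a * norm g)" by (simp add: inner_commute power2_eq_square algebra_simps)
    then show ?thesis using a by simp
  next
    case False then show ?thesis using c2 nq by simp
  qed
  define m where "m = max (norm gg) \<gamma>"
  define t where "t = norm gg"
  have m0: "m > 0" using gam unfolding m_def by simp
  have tm: "t \<le> m" unfolding m_def t_def by simp
  have t0: "t \<ge> 0" unfolding t_def by simp
  have "m *\<^sub>R qg = a *\<^sub>R gg" using c3 unfolding m_def by simp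
  then have "(1/m) *\<^sub>R (m *\<^sub>R qg) = (1/m) *\<^sub>R (a *\<^sub>R gg)" by simp
  then have qgv: "qg = (a / m) *\<^sub>R gg" using m0 by simp
  have nqg: "norm qg = a * t / m" using a m0 unfolding qgv t_def by simp
  have i1: "qg \<bullet> gg = a * t\<^sup>2 / m" unfolding qgv t_def by (simp add: power2_norm_eq_inner)
  have "\<bar>qg \<bullet> g\<bar> \<le> norm qg * norm g" by (rule Cauchy_Schwarz_ineq2)
  also have "\<dots> \<le> a * norm g"
  proof -
    have "a * t / m \<le> a" using a m0 tm t0 by (simp add: divide_le_eq mult_left_mono)
    then have "(a * t / m) * norm g \<le> a * norm g" by (rule mult_right_mono) simp
    then show ?thesis unfolding nqg .
  qed
  finally have i2: "qg \<bullet> g \<le> a * norm g" by simp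
  have "\<bar>q \<bullet> gg\<bar> \<le> norm q * norm gg" by (rule Cauchy_Schwarz_ineq2)
  also have "\<dots> \<le> a * t" unfolding t_def using nq by (simp add: mult_right_mono)
  finally have i3: "q \<bullet> gg \<le> a * t" by simp
  have e: "(qg - q) \<bullet> (gg - g) = qg \<bullet> gg - qg \<bullet> g - q \<bullet> gg + q \<bullet> g"
    by (simp add: inner_diff_left inner_diff_right)
  have key: "a * t\<^sup>2 / m - a * t \<ge> - (a * \<gamma> / 4)"
  proof (cases "t \<ge> \<gamma>")
    case True
    then have "m = t" unfolding m_def t_def by simp
    then show ?thesis using True gam a by (simp add: power2_eq_square)
  next
    case False
    then have "m = \<gamma>" unfolding m_def t_def by simp
    have "a * t\<^sup>2 / m - a * t + a * \<gamma> / 4 = a * (t - \<gamma>/2)\<^sup>2 / \<gamma>"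
      using \<open>m = \<gamma>\<close> gam by (simp add: field_simps power2_eq_square)
    also have "\<dots> \<ge> 0" using a gam by simp
    finally show ?thesis by simp
  qed
  show ?thesis using e i1 i2 i3 qg_eq key by linarith
qed



lemma L2_pair:
  fixes a :: "real^'n::finite \<Rightarrow> 'b::euclidean_space" and b :: "real^'n \<Rightarrow> 'c::euclidean_space"
  assumes "L2 \<Omega> a" "L2 \<Omega> b" shows "L2 \<Omega> (\<lambda>x. (a x, b x))"
  using assms unfolding L2_def by (auto simp: norm_Pair intro!: borel_measurable_Pair)

lemma L2_mult:
  fixes a b :: "real^'n::finite \<Rightarrow> real"
  assumes "L2 \<Omega> a" "L2 \<Omega> b" shows "integrable (lebesgue_on \<Omega>) (\<lambda>x. a x * b x)"
  using L2_inner[OF assms] by simp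

lemma eq_int4:
  assumes "integrable M a" "integrable M b" "integrable M c" "integrable M d"
    "(LINT x|M. a x) + \<mu> * (LINT x|M. b x) + (LINT x|M. c x) - (LINT x|M. d x) = (0::real)"
  shows "(LINT x|M. a x + \<mu> * b x + c x - d x) = 0"
  using assms by (simp add: integral_add integral_diff)

lemma eq_int3:
  assumes "integrable M a" "integrable M b" "integrable M c"
    "\<alpha> * (LINT x|M. a x) - (LINT x|M. b x) + (LINT x|M. c x) = (0::real)"
  shows "(LINT x|M. \<alpha> * a x - b x + c x) = 0"
  using assms by (simp add: integral_add integral_diff)

lemma int8:
  fixes a b c d e f g h :: "'a \<Rightarrow> real"
  assumes "integrable M a" "integrable M b" "integrable M c" "integrable M d"
     "integrable M e" "integrable M f" "integrable M g" "integrable M h"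
  shows "(LINT x|M. (a x - b x - c x + d x) + (e x - f x - g x + h x)) =
     (LINT x|M. a x) - (LINT x|M. b x) - (LINT x|M. c x) + (LINT x|M. d x) +
     ((LINT x|M. e x) - (LINT x|M. f x) - (LINT x|M. g x) + (LINT x|M. h x))"
  using assms by (simp add: integral_add integral_diff)

lemma energy:
  fixes \<Omega> :: "(real^'n::finite) set"
  assumes E0: "equations \<Omega> \<mu> \<alpha> f w u q p" and Eg: "equations \<Omega> \<mu> \<alpha> f W U Q P" and f: "L2 \<Omega> f"
  shows "(LINT x|lebesgue_on \<Omega>.
      ((U x - u x)\<^sup>2 + \<mu> * (norm (grad \<Omega> U x - grad \<Omega> u x))\<^sup>2
       + \<alpha> * ((norm (W x - w x))\<^sup>2 + (norm (Grad \<Omega> W x - Grad \<Omega> w x))\<^sup>2))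
      + ((Q x - q x) \<bullet> ((grad \<Omega> U x - W x) - (grad \<Omega> u x - w x))
         + (P x - p x) \<bullet> (symgrad \<Omega> W x - symgrad \<Omega> w x))) = 0"
proof -
  let ?M = "lebesgue_on \<Omega>"
  have w: "H1v \<Omega> w" and u: "H1 \<Omega> u" and q: "L2 \<Omega> q" and p: "L2 \<Omega> p"
    and equ: "\<And>v. H1 \<Omega> v \<Longrightarrow>
        (LINT x|?M. u x * v x) + \<mu> * (LINT x|?M. grad \<Omega> u x \<bullet> grad \<Omega> v x)
        + (LINT x|?M. q x \<bullet> grad \<Omega> v x) - (LINT x|?M. f x * v x) = 0"
    and eqw: "\<And>\<omega>. H1v \<Omega> \<omega> \<Longrightarrow>
        \<alpha> * (LINT x|?M. w x \<bullet> \<omega> x + Grad \<Omega> w x \<bullet> Grad \<Omega> \<omega> x)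
        - (LINT x|?M. q x \<bullet> \<omega> x) + (LINT x|?M. p x \<bullet> symgrad \<Omega> \<omega> x) = 0"
    using E0 unfolding equations_def by auto
  have W: "H1v \<Omega> W" and U: "H1 \<Omega> U" and Q: "L2 \<Omega> Q" and P: "L2 \<Omega> P"
    and eqU: "\<And>v. H1 \<Omega> v \<Longrightarrow>
        (LINT x|?M. U x * v x) + \<mu> * (LINT x|?M. grad \<Omega> U x \<bullet> grad \<Omega> v x)
        + (LINT x|?M. Q x \<bullet> grad \<Omega> v x) - (LINT x|?M. f x * v x) = 0"
    and eqW: "\<And>\<omega>. H1v \<Omega> \<omega> \<Longrightarrow>
        \<alpha> * (LINT x|?M. W x \<bullet> \<omega> x + Grad \<Omega> W x \<bullet> Grad \<Omega> \<omega> x)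
        - (LINT x|?M. Q x \<bullet> \<omega> x) + (LINT x|?M. P x \<bullet> symgrad \<Omega> \<omega> x) = 0"
    using Eg unfolding equations_def by auto
  note L = H1_L2[OF u] H1_L2[OF U] L2_grad[OF u] L2_grad[OF U] H1v_L2[OF w] H1v_L2[OF W]
     L2_Grad[OF w] L2_Grad[OF W] L2_symgrad[OF w] L2_symgrad[OF W] q Q p P f
  define e where "e = (\<lambda>(a::real^'n \<Rightarrow> real) ga b c x. a x * b x + \<mu> * (ga x \<bullet> grad \<Omega> b x) + c x \<bullet> grad \<Omega> b x - f x * b x)"
  define h where "h = (\<lambda>(a::real^'n \<Rightarrow> real^'n) Ga b c d x. \<alpha> * (a x \<bullet> b x + Ga x \<bullet> Grad \<Omega> b x) - c x \<bullet> b x + d x \<bullet> symgrad \<Omega> b x)"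
  have e1: "(LINT x|?M. e U (grad \<Omega> U) U Q x) = 0" unfolding e_def
    by (rule eq_int4[OF _ _ _ _ eqU[OF U]]) (use L in \<open>auto intro: L2_mult L2_inner\<close>)
  have e2: "(LINT x|?M. e U (grad \<Omega> U) u Q x) = 0" unfolding e_def
    by (rule eq_int4[OF _ _ _ _ eqU[OF u]]) (use L in \<open>auto intro: L2_mult L2_inner\<close>)
  have e3: "(LINT x|?M. e u (grad \<Omega> u) U q x) = 0" unfolding e_def
    by (rule eq_int4[OF _ _ _ _ equ[OF U]]) (use L in \<open>auto intro: L2_mult L2_inner\<close>)
  have e4: "(LINT x|?M. e u (grad \<Omega> u) u q x) = 0" unfolding e_def
    by (rule eq_int4[OF _ _ _ _ equ[OF u]]) (use L in \<open>auto intro: L2_mult L2_inner\<close>)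
  have h1: "(LINT x|?M. h W (Grad \<Omega> W) W Q P x) = 0" unfolding h_def
    by (rule eq_int3[OF _ _ _ eqW[OF W]]) (use L in \<open>auto intro: L2_inner Bochner_Integration.integrable_add\<close>)
  have h2: "(LINT x|?M. h W (Grad \<Omega> W) w Q P x) = 0" unfolding h_def
    by (rule eq_int3[OF _ _ _ eqW[OF w]]) (use L in \<open>auto intro: L2_inner Bochner_Integration.integrable_add\<close>)
  have h3: "(LINT x|?M. h w (Grad \<Omega> w) W q p x) = 0" unfolding h_def
    by (rule eq_int3[OF _ _ _ eqw[OF W]]) (use L in \<open>auto intro: L2_inner Bochner_Integration.integrable_add\<close>)
  have h4: "(LINT x|?M. h w (Grad \<Omega> w) w q p x) = 0" unfolding h_def
    by (rule eq_int3[OF _ _ _ eqw[OF w]]) (use L in \<open>auto intro: L2_inner Bochner_Integration.integrable_add\<close>)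
  have ie: "integrable ?M (e a ga b c)" if "L2 \<Omega> a" "L2 \<Omega> ga" "H1 \<Omega> b" "L2 \<Omega> c" for a ga b c
    unfolding e_def using that L
    by (auto intro!: L2_mult L2_inner Bochner_Integration.integrable_add Bochner_Integration.integrable_diff integrable_mult_right H1_L2 L2_grad)
  have ih: "integrable ?M (h a Ga b c d)" if "L2 \<Omega> a" "L2 \<Omega> Ga" "H1v \<Omega> b" "L2 \<Omega> c" "L2 \<Omega> d" for a Ga b c d
    unfolding h_def using that L
    by (auto intro!: L2_inner Bochner_Integration.integrable_add Bochner_Integration.integrable_diff integrable_mult_right H1v_L2 L2_Grad L2_symgrad)
  have "(LINT x|lebesgue_on \<Omega>.
      ((U x - u x)\<^sup>2 + \<mu> * (norm (grad \<Omega> U x - grad \<Omega> u x))\<^sup>2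
       + \<alpha> * ((norm (W x - w x))\<^sup>2 + (norm (Grad \<Omega> W x - Grad \<Omega> w x))\<^sup>2))
      + ((Q x - q x) \<bullet> ((grad \<Omega> U x - W x) - (grad \<Omega> u x - w x))
         + (P x - p x) \<bullet> (symgrad \<Omega> W x - symgrad \<Omega> w x))) =
    (LINT x|?M. (e U (grad \<Omega> U) U Q x - e U (grad \<Omega> U) u Q x - e u (grad \<Omega> u) U q x + e u (grad \<Omega> u) u q x)
       + (h W (Grad \<Omega> W) W Q P x - h W (Grad \<Omega> W) w Q P x - h w (Grad \<Omega> w) W q p x + h w (Grad \<Omega> w) w q p x))"
    unfolding e_def h_def
    by (rule Bochner_Integration.integral_cong[OF refl])
       (unfold power2_norm_eq_inner, simp add: inner_diff_left inner_diff_right inner_commute algebra_simps power2_eq_square)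
  also have "\<dots> = 0"
    by (subst int8) (use e1 e2 e3 e4 h1 h2 h3 h4 L u U w W in \<open>auto intro!: ie ih\<close>)
  finally show ?thesis .
qed


lemma est:
  fixes \<Omega> :: "(real^'n::finite) set"
  assumes E0: "equations \<Omega> \<mu> \<alpha> f w u q p" and Eg: "equations \<Omega> \<mu> \<alpha> f W U Q P" and f: "L2 \<Omega> f"
    and gam: "\<gamma> > 0" and par: "\<mu> > 0" "\<alpha> > 0"
    and bnd: "\<And>x. x \<in> \<Omega> \<Longrightarrow> 0 < \<alpha>0 x \<and> \<alpha>0 x \<le> M0 \<and> 0 < \<alpha>1 x \<and> \<alpha>1 x \<le> M1"
    and fin: "finite_measure (lebesgue_on \<Omega>)"
    and ae0: "AE x in lebesgue_on \<Omega>.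
        norm (q x) \<le> \<alpha>1 x \<and> norm (p x) \<le> \<alpha>0 x \<and>
        (norm (q x) = \<alpha>1 x \<longrightarrow>
           \<alpha>1 x *\<^sub>R (grad \<Omega> u x - w x) - norm (grad \<Omega> u x - w x) *\<^sub>R q x = 0) \<and>
        (norm (q x) < \<alpha>1 x \<longrightarrow> grad \<Omega> u x - w x = 0) \<and>
        (norm (p x) = \<alpha>0 x \<longrightarrow>
           \<alpha>0 x *\<^sub>R symgrad \<Omega> w x - norm (symgrad \<Omega> w x) *\<^sub>R p x = 0) \<and>
        (norm (p x) < \<alpha>0 x \<longrightarrow> symgrad \<Omega> w x = 0)"
    and aeg: "AE x in lebesgue_on \<Omega>.
        max (norm (grad \<Omega> U x - W x)) \<gamma> *\<^sub>R Q x - \<alpha>1 x *\<^sub>R (grad \<Omega> U x - W x) = 0 \<and>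
        max (norm (symgrad \<Omega> W x)) \<gamma> *\<^sub>R P x - \<alpha>0 x *\<^sub>R symgrad \<Omega> W x = 0"
  shows "(LINT x|lebesgue_on \<Omega>. (U x - u x)\<^sup>2 + (norm (grad \<Omega> U x - grad \<Omega> u x))\<^sup>2)
           \<le> \<gamma> * ((M0 + M1) / 4 * measure (lebesgue_on \<Omega>) \<Omega>) / min 1 \<mu>
      \<and> (LINT x|lebesgue_on \<Omega>. (norm (W x - w x))\<^sup>2 + (norm (Grad \<Omega> W x - Grad \<Omega> w x))\<^sup>2)
           \<le> \<gamma> * ((M0 + M1) / 4 * measure (lebesgue_on \<Omega>) \<Omega>) / min 1 \<alpha>"
proof -
  let ?M = "lebesgue_on \<Omega>"
  define K where "K = (M0 + M1) / 4 * measure (lebesgue_on \<Omega>) \<Omega>"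
  have w: "H1v \<Omega> w" and u: "H1 \<Omega> u" and q: "L2 \<Omega> q" and p: "L2 \<Omega> p"
    using E0 unfolding equations_def by auto
  have W: "H1v \<Omega> W" and U: "H1 \<Omega> U" and Q: "L2 \<Omega> Q" and P: "L2 \<Omega> P"
    using Eg unfolding equations_def by auto
  note L = H1_L2[OF u] H1_L2[OF U] L2_grad[OF u] L2_grad[OF U] H1v_L2[OF w] H1v_L2[OF W]
     L2_Grad[OF w] L2_Grad[OF W] L2_symgrad[OF w] L2_symgrad[OF W] q Q p P f
  define N1 where "N1 = (\<lambda>x. (U x - u x)\<^sup>2 + (norm (grad \<Omega> U x - grad \<Omega> u x))\<^sup>2)"
  define N2 where "N2 = (\<lambda>x. (norm (W x - w x))\<^sup>2 + (norm (Grad \<Omega> W x - Grad \<Omega> w x))\<^sup>2)"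
  define N where "N = (\<lambda>x. (U x - u x)\<^sup>2 + \<mu> * (norm (grad \<Omega> U x - grad \<Omega> u x))\<^sup>2
       + \<alpha> * ((norm (W x - w x))\<^sup>2 + (norm (Grad \<Omega> W x - Grad \<Omega> w x))\<^sup>2))"
  define R where "R = (\<lambda>x. (Q x - q x) \<bullet> ((grad \<Omega> U x - W x) - (grad \<Omega> u x - w x))
         + (P x - p x) \<bullet> (symgrad \<Omega> W x - symgrad \<Omega> w x))"
  have sq: "integrable ?M (\<lambda>x. (norm (a x - b x))\<^sup>2)" if "L2 \<Omega> a" "L2 \<Omega> b" for a b :: "real^'n \<Rightarrow> 'z::euclidean_space"
    using L2_diff[OF that] by (simp add: L2_def)
  have sqr: "integrable ?M (\<lambda>x. (a x - b x)\<^sup>2)" if "L2 \<Omega> a" "L2 \<Omega> b" for a b :: "real^'n \<Rightarrow> real"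
    using sq[OF that] by simp
  have iN1: "integrable ?M N1" unfolding N1_def using L by (auto intro!: sq sqr Bochner_Integration.integrable_add)
  have iN2: "integrable ?M N2" unfolding N2_def using L by (auto intro!: sq Bochner_Integration.integrable_add)
  have iN: "integrable ?M N" unfolding N_def using L
    by (auto intro!: sq sqr Bochner_Integration.integrable_add integrable_mult_right)
  have iR: "integrable ?M R" unfolding R_def using L
    by (auto intro!: L2_inner L2_diff Bochner_Integration.integrable_add)
  have "(LINT x|?M. N x + R x) = 0" unfolding N_def R_def by (rule energy[OF E0 Eg f])
  then have NR: "(LINT x|?M. N x) + (LINT x|?M. R x) = 0" using iN iR by (simp add: integral_add)
  have "(LINT x|?M. - (\<gamma> * (M0 + M1) / 4)) \<le> (LINT x|?M. R x)"
  proof (rule integral_mono_AE)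
    show "integrable ?M (\<lambda>x. - (\<gamma> * (M0 + M1) / 4))" using fin by (simp add: finite_measure.integrable_const)
    show "integrable ?M R" by (rule iR)
    show "AE x in ?M. - (\<gamma> * (M0 + M1) / 4) \<le> R x"
      using ae0 aeg AE_space[of ?M]
    proof eventually_elim
      case (elim x)
      then have x: "x \<in> \<Omega>" by simp
      note b = bnd[OF x]
      have r1: "(Q x - q x) \<bullet> ((grad \<Omega> U x - W x) - (grad \<Omega> u x - w x)) \<ge> - (\<alpha>1 x * \<gamma> / 4)"
        by (rule mono_est) (use elim b gam in auto)
      have r2: "(P x - p x) \<bullet> (symgrad \<Omega> W x - symgrad \<Omega> w x) \<ge> - (\<alpha>0 x * \<gamma> / 4)"
        by (rule mono_est) (use elim b gam in auto)
      have "\<alpha>1 x * \<gamma> \<le> M1 * \<gamma>" "\<alpha>0 x * \<gamma> \<le> M0 * \<gamma>" using b gam by (auto intro: mult_right_mono)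
      moreover have "\<gamma> * (M0 + M1) / 4 = M0 * \<gamma> / 4 + M1 * \<gamma> / 4" by (simp add: algebra_simps)
      ultimately show ?case using r1 r2 unfolding R_def by linarith
    qed
  qed
  then have RK: "(LINT x|?M. R x) \<ge> - (\<gamma> * K)" unfolding K_def by (simp add: algebra_simps)
  have NK: "(LINT x|?M. N x) \<le> \<gamma> * K" using NR RK by linarith
  have c1: "min 1 \<mu> * (LINT x|?M. N1 x) \<le> (LINT x|?M. N x)"
  proof -
    have "min 1 \<mu> * (LINT x|?M. N1 x) = (LINT x|?M. min 1 \<mu> * N1 x)" by simp
    also have "\<dots> \<le> (LINT x|?M. N x)"
    proof (rule integral_mono)
      show "integrable ?M (\<lambda>x. min 1 \<mu> * N1 x)" using iN1 by simp
      show "integrable ?M N" by (rule iN)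
      fix x
      have "min 1 \<mu> * (U x - u x)\<^sup>2 \<le> (U x - u x)\<^sup>2"
        using mult_right_mono[of "min 1 \<mu>" 1 "(U x - u x)\<^sup>2"] by simp
      moreover have "min 1 \<mu> * (norm (grad \<Omega> U x - grad \<Omega> u x))\<^sup>2 \<le> \<mu> * (norm (grad \<Omega> U x - grad \<Omega> u x))\<^sup>2"
        by (intro mult_right_mono) auto
      moreover have "0 \<le> \<alpha> * ((norm (W x - w x))\<^sup>2 + (norm (Grad \<Omega> W x - Grad \<Omega> w x))\<^sup>2)" using par by simp
      ultimately show "min 1 \<mu> * N1 x \<le> N x" unfolding N1_def N_def by (simp add: algebra_simps)
    qed
    finally show ?thesis .
  qed
  have c2: "min 1 \<alpha> * (LINT x|?M. N2 x) \<le> (LINT x|?M. N x)"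
  proof -
    have "min 1 \<alpha> * (LINT x|?M. N2 x) = (LINT x|?M. min 1 \<alpha> * N2 x)" by simp
    also have "\<dots> \<le> (LINT x|?M. N x)"
    proof (rule integral_mono)
      show "integrable ?M (\<lambda>x. min 1 \<alpha> * N2 x)" using iN2 by simp
      show "integrable ?M N" by (rule iN)
      fix x
      have "min 1 \<alpha> * N2 x \<le> \<alpha> * N2 x" unfolding N2_def by (intro mult_right_mono) auto
      moreover have "0 \<le> (U x - u x)\<^sup>2 + \<mu> * (norm (grad \<Omega> U x - grad \<Omega> u x))\<^sup>2" using par by simp
      ultimately show "min 1 \<alpha> * N2 x \<le> N x" unfolding N2_def N_def by (simp add: algebra_simps)
    qed
    finally show ?thesis .
  qed
  have m1: "min 1 \<mu> > 0" "min 1 \<alpha> > 0" using par by auto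
  show ?thesis
    using c1 c2 NK m1 unfolding K_def[symmetric] N1_def[symmetric] N2_def[symmetric]
    by (auto simp: le_divide_eq mult.commute)
qed



lemma weakU:
  fixes \<Omega> :: "(real^'n::finite) set"
  assumes E0: "equations \<Omega> \<mu> \<alpha> f w u q p" and Eg: "equations \<Omega> \<mu> \<alpha> f W U Q P" and f: "L2 \<Omega> f"
    and v: "H1 \<Omega> v"
  shows "- (LINT x|lebesgue_on \<Omega>. Q x \<bullet> grad \<Omega> v x) - - (LINT x|lebesgue_on \<Omega>. q x \<bullet> grad \<Omega> v x)
    = (LINT x|lebesgue_on \<Omega>. (U x - u x, grad \<Omega> U x - grad \<Omega> u x) \<bullet> (v x, \<mu> *\<^sub>R grad \<Omega> v x))"
proof -
  let ?M = "lebesgue_on \<Omega>"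
  have u: "H1 \<Omega> u" and U: "H1 \<Omega> U"
    and equ: "(LINT x|?M. u x * v x) + \<mu> * (LINT x|?M. grad \<Omega> u x \<bullet> grad \<Omega> v x)
        + (LINT x|?M. q x \<bullet> grad \<Omega> v x) - (LINT x|?M. f x * v x) = 0"
    and eqU: "(LINT x|?M. U x * v x) + \<mu> * (LINT x|?M. grad \<Omega> U x \<bullet> grad \<Omega> v x)
        + (LINT x|?M. Q x \<bullet> grad \<Omega> v x) - (LINT x|?M. f x * v x) = 0"
    using E0 Eg v unfolding equations_def by auto
  note L = H1_L2[OF u] H1_L2[OF U] L2_grad[OF u] L2_grad[OF U] H1_L2[OF v] L2_grad[OF v]
  have "(LINT x|?M. (U x - u x, grad \<Omega> U x - grad \<Omega> u x) \<bullet> (v x, \<mu> *\<^sub>R grad \<Omega> v x))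
     = (LINT x|?M. (U x * v x - u x * v x) + (\<mu> * (grad \<Omega> U x \<bullet> grad \<Omega> v x) - \<mu> * (grad \<Omega> u x \<bullet> grad \<Omega> v x)))"
    by (rule Bochner_Integration.integral_cong[OF refl]) (simp add: inner_diff_left algebra_simps)
  also have "\<dots> = ((LINT x|?M. U x * v x) - (LINT x|?M. u x * v x))
     + (\<mu> * (LINT x|?M. grad \<Omega> U x \<bullet> grad \<Omega> v x) - \<mu> * (LINT x|?M. grad \<Omega> u x \<bullet> grad \<Omega> v x))"
    using L by (simp add: integral_add integral_diff L2_mult L2_inner Bochner_Integration.integrable_diff
        Bochner_Integration.integrable_add)
  finally show ?thesis using equ eqU by linarith
qed

lemma weakW:
  fixes \<Omega> :: "(real^'n::finite) set"
  assumes E0: "equations \<Omega> \<mu> \<alpha> f w u q p" and Eg: "equations \<Omega> \<mu> \<alpha> f W U Q P"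
    and v: "H1v \<Omega> \<omega>"
  shows "((LINT x|lebesgue_on \<Omega>. Q x \<bullet> \<omega> x) - (LINT x|lebesgue_on \<Omega>. P x \<bullet> symgrad \<Omega> \<omega> x))
     - ((LINT x|lebesgue_on \<Omega>. q x \<bullet> \<omega> x) - (LINT x|lebesgue_on \<Omega>. p x \<bullet> symgrad \<Omega> \<omega> x))
    = (LINT x|lebesgue_on \<Omega>. (W x - w x, Grad \<Omega> W x - Grad \<Omega> w x) \<bullet> (\<alpha> *\<^sub>R \<omega> x, \<alpha> *\<^sub>R Grad \<Omega> \<omega> x))"
proof -
  let ?M = "lebesgue_on \<Omega>"
  have w: "H1v \<Omega> w" and W: "H1v \<Omega> W"
    and eqw: "\<alpha> * (LINT x|?M. w x \<bullet> \<omega> x + Grad \<Omega> w x \<bullet> Grad \<Omega> \<omega> x)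
        - (LINT x|?M. q x \<bullet> \<omega> x) + (LINT x|?M. p x \<bullet> symgrad \<Omega> \<omega> x) = 0"
    and eqW: "\<alpha> * (LINT x|?M. W x \<bullet> \<omega> x + Grad \<Omega> W x \<bullet> Grad \<Omega> \<omega> x)
        - (LINT x|?M. Q x \<bullet> \<omega> x) + (LINT x|?M. P x \<bullet> symgrad \<Omega> \<omega> x) = 0"
    using E0 Eg v unfolding equations_def by auto
  note L = H1v_L2[OF w] H1v_L2[OF W] L2_Grad[OF w] L2_Grad[OF W] H1v_L2[OF v] L2_Grad[OF v]
  have "(LINT x|?M. (W x - w x, Grad \<Omega> W x - Grad \<Omega> w x) \<bullet> (\<alpha> *\<^sub>R \<omega> x, \<alpha> *\<^sub>R Grad \<Omega> \<omega> x))
     = (LINT x|?M. \<alpha> * (W x \<bullet> \<omega> x + Grad \<Omega> W x \<bullet> Grad \<Omega> \<omega> x) - \<alpha> * (w x \<bullet> \<omega> x + Grad \<Omega> w x \<bullet> Grad \<Omega> \<omega> x))"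
    by (rule Bochner_Integration.integral_cong[OF refl]) (simp add: inner_diff_left algebra_simps)
  also have "\<dots> = \<alpha> * (LINT x|?M. W x \<bullet> \<omega> x + Grad \<Omega> W x \<bullet> Grad \<Omega> \<omega> x) - \<alpha> * (LINT x|?M. w x \<bullet> \<omega> x + Grad \<Omega> w x \<bullet> Grad \<Omega> \<omega> x)"
    using L by (simp add: integral_diff L2_inner Bochner_Integration.integrable_add)
  finally show ?thesis using eqw eqW by linarith
qed

lemma conv_lemma:
  fixes X D :: "real \<Rightarrow> real"
  assumes "eventually (\<lambda>\<gamma>. \<bar>X \<gamma>\<bar> \<le> sqrt (D \<gamma>) * C) F" "(D \<longlongrightarrow> 0) F"
  shows "(X \<longlongrightarrow> 0) F"
proof (rule Lim_null_comparison)
  show "eventually (\<lambda>\<gamma>. norm (X \<gamma>) \<le> sqrt (D \<gamma>) * C) F" using assms(1) by simp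
  have "((\<lambda>\<gamma>. sqrt (D \<gamma>) * C) \<longlongrightarrow> sqrt 0 * C) F" by (intro tendsto_intros assms(2))
  then show "((\<lambda>\<gamma>. sqrt (D \<gamma>) * C) \<longlongrightarrow> 0) F" by simp
qed


theorem proposition4p4:
  fixes \<Omega> :: "(real^'n::finite) set"
    and \<mu> \<alpha> :: real
    and \<alpha>0 \<alpha>1 f u :: "real^'n \<Rightarrow> real"
    and w q :: "real^'n \<Rightarrow> real^'n"
    and p :: "real^'n \<Rightarrow> real^'n^'n"
    and ug :: "real \<Rightarrow> real^'n \<Rightarrow> real"
    and wg qg :: "real \<Rightarrow> real^'n \<Rightarrow> real^'n"
    and pg :: "real \<Rightarrow> real^'n \<Rightarrow> real^'n^'n"
  assumes dim: "CARD('n) \<ge> 2"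
    and dom: "bounded \<Omega>" "open \<Omega>" "lipschitz_boundary \<Omega>"
    and cont: "continuous_on (closure \<Omega>) \<alpha>0" "continuous_on (closure \<Omega>) \<alpha>1"
    and lower: "\<exists>a>0. \<forall>x\<in>closure \<Omega>. \<alpha>0 x > a \<and> \<alpha>1 x > a"
    and f: "L2 \<Omega> f"
    and par: "\<mu> > 0" "\<alpha> > 0"
    and S0: "system_S0 \<Omega> \<mu> \<alpha> \<alpha>0 \<alpha>1 f w u q p"
    and Sg: "\<And>\<gamma>. \<gamma> > 0 \<Longrightarrow> system_Sgamma \<Omega> \<mu> \<alpha> \<alpha>0 \<alpha>1 f \<gamma> (wg \<gamma>) (ug \<gamma>) (qg \<gamma>) (pg \<gamma>)"
  shows "((\<lambda>\<gamma>. LINT x|lebesgue_on \<Omega>. (ug \<gamma> x - u x)\<^sup>2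
                 + (norm (grad \<Omega> (ug \<gamma>) x - grad \<Omega> u x))\<^sup>2) \<longlongrightarrow> 0) (at_right 0) \<and>
         ((\<lambda>\<gamma>. LINT x|lebesgue_on \<Omega>. (norm (wg \<gamma> x - w x))\<^sup>2
                 + (norm (Grad \<Omega> (wg \<gamma>) x - Grad \<Omega> w x))\<^sup>2) \<longlongrightarrow> 0) (at_right 0) \<and>
         (\<forall>v. H1 \<Omega> v \<longrightarrow>
           ((\<lambda>\<gamma>. - (LINT x|lebesgue_on \<Omega>. qg \<gamma> x \<bullet> grad \<Omega> v x))
              \<longlongrightarrow> - (LINT x|lebesgue_on \<Omega>. q x \<bullet> grad \<Omega> v x)) (at_right 0)) \<and>
         (\<forall>\<omega>. H1v \<Omega> \<omega> \<longrightarrow>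
           ((\<lambda>\<gamma>. (LINT x|lebesgue_on \<Omega>. qg \<gamma> x \<bullet> \<omega> x) - (LINT x|lebesgue_on \<Omega>. pg \<gamma> x \<bullet> symgrad \<Omega> \<omega> x))
              \<longlongrightarrow> (LINT x|lebesgue_on \<Omega>. q x \<bullet> \<omega> x) - (LINT x|lebesgue_on \<Omega>. p x \<bullet> symgrad \<Omega> \<omega> x)) (at_right 0))"
proof -
  let ?M = "lebesgue_on \<Omega>"
  have E0: "equations \<Omega> \<mu> \<alpha> f w u q p" and ae0: "AE x in lebesgue_on \<Omega>.
        norm (q x) \<le> \<alpha>1 x \<and> norm (p x) \<le> \<alpha>0 x \<and>
        (norm (q x) = \<alpha>1 x \<longrightarrow>
           \<alpha>1 x *\<^sub>R (grad \<Omega> u x - w x) - norm (grad \<Omega> u x - w x) *\<^sub>R q x = 0) \<and>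
        (norm (q x) < \<alpha>1 x \<longrightarrow> grad \<Omega> u x - w x = 0) \<and>
        (norm (p x) = \<alpha>0 x \<longrightarrow>
           \<alpha>0 x *\<^sub>R symgrad \<Omega> w x - norm (symgrad \<Omega> w x) *\<^sub>R p x = 0) \<and>
        (norm (p x) < \<alpha>0 x \<longrightarrow> symgrad \<Omega> w x = 0)"
    using S0 unfolding system_S0_def by auto
  have Eg: "equations \<Omega> \<mu> \<alpha> f (wg \<gamma>) (ug \<gamma>) (qg \<gamma>) (pg \<gamma>)" and aeg: "AE x in lebesgue_on \<Omega>.
        max (norm (grad \<Omega> (ug \<gamma>) x - wg \<gamma> x)) \<gamma> *\<^sub>R qg \<gamma> x - \<alpha>1 x *\<^sub>R (grad \<Omega> (ug \<gamma>) x - wg \<gamma> x) = 0 \<and>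
        max (norm (symgrad \<Omega> (wg \<gamma>) x)) \<gamma> *\<^sub>R pg \<gamma> x - \<alpha>0 x *\<^sub>R symgrad \<Omega> (wg \<gamma>) x = 0"
    if "\<gamma> > 0" for \<gamma>
    using Sg[OF that] unfolding system_Sgamma_def by auto
  obtain a0 where a0: "a0 > 0" "\<forall>x\<in>closure \<Omega>. \<alpha>0 x > a0 \<and> \<alpha>1 x > a0" using lower by blast
  have cc: "compact (closure \<Omega>)" using dom(1) by simp
  obtain M0 where M0: "\<forall>y\<in>\<alpha>0 ` closure \<Omega>. \<bar>y\<bar> \<le> M0"
    using compact_imp_bounded[OF compact_continuous_image[OF cont(1) cc]] unfolding bounded_real by blast
  obtain M1 where M1: "\<forall>y\<in>\<alpha>1 ` closure \<Omega>. \<bar>y\<bar> \<le> M1"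
    using compact_imp_bounded[OF compact_continuous_image[OF cont(2) cc]] unfolding bounded_real by blast
  have bnd: "0 < \<alpha>0 x \<and> \<alpha>0 x \<le> M0 \<and> 0 < \<alpha>1 x \<and> \<alpha>1 x \<le> M1" if "x \<in> \<Omega>" for x
  proof -
    have xc: "x \<in> closure \<Omega>" using that closure_subset by blast
    then have "\<bar>\<alpha>0 x\<bar> \<le> M0" "\<bar>\<alpha>1 x\<bar> \<le> M1" using M0 M1 by auto
    then show ?thesis using a0 xc by fastforce
  qed
  have fin: "finite_measure ?M" by (rule finite_measure_lebesgue_on[OF lmeasurable_open[OF dom(1) dom(2)]])
  define K where "K = (M0 + M1) / 4 * measure ?M \<Omega>"
  define D1 where "D1 = (\<lambda>\<gamma>. LINT x|?M. (ug \<gamma> x - u x)\<^sup>2 + (norm (grad \<Omega> (ug \<gamma>) x - grad \<Omega> u x))\<^sup>2)"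
  define D2 where "D2 = (\<lambda>\<gamma>. LINT x|?M. (norm (wg \<gamma> x - w x))\<^sup>2 + (norm (Grad \<Omega> (wg \<gamma>) x - Grad \<Omega> w x))\<^sup>2)"
  have est1: "D1 \<gamma> \<le> \<gamma> * K / min 1 \<mu> \<and> D2 \<gamma> \<le> \<gamma> * K / min 1 \<alpha>" if "\<gamma> > 0" for \<gamma>
    unfolding D1_def D2_def K_def
    by (rule est[OF E0 Eg[OF that] f that par bnd fin ae0 aeg[OF that]])
  have pos: "eventually (\<lambda>\<gamma>. \<gamma> > 0) (at_right (0::real))" by (simp add: eventually_at_filter)
  have lim: "((\<lambda>\<gamma>. \<gamma> * K / c) \<longlongrightarrow> 0) (at_right 0)" for c
  proof -
    have "((\<lambda>\<gamma>. \<gamma> * (K / c)) \<longlongrightarrow> 0 * (K / c)) (at_right 0)" by (intro tendsto_intros)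
    then show ?thesis by simp
  qed
  have D1lim: "(D1 \<longlongrightarrow> 0) (at_right 0)"
  proof (rule tendsto_sandwich[OF _ _ tendsto_const lim])
    show "eventually (\<lambda>\<gamma>. 0 \<le> D1 \<gamma>) (at_right 0)" unfolding D1_def by (intro always_eventually allI integral_nonneg_AE) auto
    show "eventually (\<lambda>\<gamma>. D1 \<gamma> \<le> \<gamma> * K / min 1 \<mu>) (at_right 0)" using pos by eventually_elim (use est1 in auto)
  qed
  have D2lim: "(D2 \<longlongrightarrow> 0) (at_right 0)"
  proof (rule tendsto_sandwich[OF _ _ tendsto_const lim])
    show "eventually (\<lambda>\<gamma>. 0 \<le> D2 \<gamma>) (at_right 0)" unfolding D2_def by (intro always_eventually allI integral_nonneg_AE) auto
    show "eventually (\<lambda>\<gamma>. D2 \<gamma> \<le> \<gamma> * K / min 1 \<alpha>) (at_right 0)" using pos by eventually_elim (use est1 in auto)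
  qed
  note Lu = H1_L2[of \<Omega> u] L2_grad[of \<Omega> u] H1v_L2[of \<Omega> w] L2_Grad[of \<Omega> w]
  have part3: "((\<lambda>\<gamma>. - (LINT x|?M. qg \<gamma> x \<bullet> grad \<Omega> v x)) \<longlongrightarrow> - (LINT x|?M. q x \<bullet> grad \<Omega> v x)) (at_right 0)"
    if v: "H1 \<Omega> v" for v
  proof (rule LIM_zero_cancel, rule conv_lemma[where D = D1])
    define C where "C = sqrt (LINT x|?M. (norm ((v x, \<mu> *\<^sub>R grad \<Omega> v x)))\<^sup>2)"
    show "eventually (\<lambda>\<gamma>. \<bar>- (LINT x|?M. qg \<gamma> x \<bullet> grad \<Omega> v x) - - (LINT x|?M. q x \<bullet> grad \<Omega> v x)\<bar> \<le> sqrt (D1 \<gamma>) * C) (at_right 0)"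
      using pos
    proof eventually_elim
      case (elim \<gamma>)
      note Eg' = Eg[OF elim]
      have uu: "H1 \<Omega> u" "H1 \<Omega> (ug \<gamma>)" using E0 Eg' unfolding equations_def by auto
      have "\<bar>- (LINT x|?M. qg \<gamma> x \<bullet> grad \<Omega> v x) - - (LINT x|?M. q x \<bullet> grad \<Omega> v x)\<bar>
          = \<bar>LINT x|?M. (ug \<gamma> x - u x, grad \<Omega> (ug \<gamma>) x - grad \<Omega> u x) \<bullet> (v x, \<mu> *\<^sub>R grad \<Omega> v x)\<bar>"
        by (subst weakU[OF E0 Eg' f v]) (rule refl)
      also have "\<dots> \<le> sqrt (LINT x|?M. (norm ((ug \<gamma> x - u x, grad \<Omega> (ug \<gamma>) x - grad \<Omega> u x)))\<^sup>2) * C"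
        unfolding C_def using uu v
        by (intro L2_CS L2_pair L2_diff L2_scale H1_L2 L2_grad)
      also have "(LINT x|?M. (norm ((ug \<gamma> x - u x, grad \<Omega> (ug \<gamma>) x - grad \<Omega> u x)))\<^sup>2) = D1 \<gamma>"
        unfolding D1_def by (simp add: norm_Pair)
      finally show ?case .
    qed
    show "(D1 \<longlongrightarrow> 0) (at_right 0)" by (rule D1lim)
  qed
  have part4: "((\<lambda>\<gamma>. (LINT x|?M. qg \<gamma> x \<bullet> \<omega> x) - (LINT x|?M. pg \<gamma> x \<bullet> symgrad \<Omega> \<omega> x))
              \<longlongrightarrow> (LINT x|?M. q x \<bullet> \<omega> x) - (LINT x|?M. p x \<bullet> symgrad \<Omega> \<omega> x)) (at_right 0)"
    if v: "H1v \<Omega> \<omega>" for \<omega>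
  proof (rule LIM_zero_cancel, rule conv_lemma[where D = D2])
    define C where "C = sqrt (LINT x|?M. (norm ((\<alpha> *\<^sub>R \<omega> x, \<alpha> *\<^sub>R Grad \<Omega> \<omega> x)))\<^sup>2)"
    show "eventually (\<lambda>\<gamma>. \<bar>((LINT x|?M. qg \<gamma> x \<bullet> \<omega> x) - (LINT x|?M. pg \<gamma> x \<bullet> symgrad \<Omega> \<omega> x))
        - ((LINT x|?M. q x \<bullet> \<omega> x) - (LINT x|?M. p x \<bullet> symgrad \<Omega> \<omega> x))\<bar> \<le> sqrt (D2 \<gamma>) * C) (at_right 0)"
      using pos
    proof eventually_elim
      case (elim \<gamma>)
      note Eg' = Eg[OF elim]
      have ww: "H1v \<Omega> w" "H1v \<Omega> (wg \<gamma>)" using E0 Eg' unfolding equations_def by auto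
      have "\<bar>((LINT x|?M. qg \<gamma> x \<bullet> \<omega> x) - (LINT x|?M. pg \<gamma> x \<bullet> symgrad \<Omega> \<omega> x))
        - ((LINT x|?M. q x \<bullet> \<omega> x) - (LINT x|?M. p x \<bullet> symgrad \<Omega> \<omega> x))\<bar>
          = \<bar>LINT x|?M. (wg \<gamma> x - w x, Grad \<Omega> (wg \<gamma>) x - Grad \<Omega> w x) \<bullet> (\<alpha> *\<^sub>R \<omega> x, \<alpha> *\<^sub>R Grad \<Omega> \<omega> x)\<bar>"
        by (subst weakW[OF E0 Eg' v]) (rule refl)
      also have "\<dots> \<le> sqrt (LINT x|?M. (norm ((wg \<gamma> x - w x, Grad \<Omega> (wg \<gamma>) x - Grad \<Omega> w x)))\<^sup>2) * C"
        unfolding C_def using ww v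
        by (intro L2_CS L2_pair L2_diff L2_scale H1v_L2 L2_Grad)
      also have "(LINT x|?M. (norm ((wg \<gamma> x - w x, Grad \<Omega> (wg \<gamma>) x - Grad \<Omega> w x)))\<^sup>2) = D2 \<gamma>"
        unfolding D2_def by (simp add: norm_Pair)
      finally show ?case .
    qed
    show "(D2 \<longlongrightarrow> 0) (at_right 0)" by (rule D2lim)
  qed
  show ?thesis using D1lim D2lim part3 part4 unfolding D1_def D2_def by blast
qed


end
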